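(* For any signature $\Sigma$ and any reduced $\Sigma$-forests $f_1,f_2$, one has $r_{A_l(\Sigma)}(E_{f_1})=r_{A_l(\Sigma)}(E_{f_2})$ if and only if $\mathrm{tr}(f_1)=\mathrm{tr}(f_2)$.
   Context: $[P]$ is $1$ if $P$ holds, $0$ otherwise. A signature is a set $\Sigma$ with arity map $|\cdot|:\Sigma\to\mathbb N$. A $\Sigma$-term is the leaf $\bot$ or $s(t_1,\dots,t_n)$ with $s$ of arity $n$, $t_i$ terms; degree = number of internal nodes. A $\Sigma$-forest is a finite word of terms; reduced if no term is $\bot$; $E_f$ denotes the basis element of $\mathbf N(T(\Sigma))$ indexed by a reduced forest $f$. Internal nodes of $f$ are numbered $1,\dots,\deg f$ by left-to-right preorder; $d_f(i)$ is the decoration of $i$. A $\Sigma$-trimmed forest is a word of nonempty planar rooted trees with nodes decorated by elements $s\in\Sigma$ having at most $|s|$ children; $\mathrm{tr}(f)$ is obtained from a forest $f$ by deleting all leaves. $A_l(\Sigma)=\{a^s_\ell:s\in\Sigma,\ell\in\mathbb N\}$; a word $a^{s_1}_{\ell_1}\cdots a^{s_n}_{\ell_n}$ is $A_l(\Sigma)$-compatible with $f$ if $n=\deg f$, $s_i=d_f(i)$ for all $i$, and $\ell_i<\ell_{i'}$ whenever $i'$ is a child of $i$ in $f$. $r_{A_l(\Sigma)}(E_f)$ is the (possibly infinite) formal sum of all words $A_l(\Sigma)$-compatible with $f$, in the space $\mathbb K\langle A_l(\Sigma)\rangle$ of noncommutative polynomials with bounded degree. *)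

theory Defs
  imports Main
begin

text \<open>A signature is a type 's of symbols together with an arity map ar :: 's => nat.
  Sigma-terms: the leaf Bot, or a node decorated by a symbol with a list of subterms.\<close>
datatype 's sterm = Bot | Node 's "'s sterm list"

fun wf_term :: "('s \<Rightarrow> nat) \<Rightarrow> 's sterm \<Rightarrow> bool" where
  "wf_term ar Bot = True"
| "wf_term ar (Node s ts) = (length ts = ar s \<and> (\<forall>t\<in>set ts. wf_term ar t))"

definition sigma_forest :: "('s \<Rightarrow> nat) \<Rightarrow> 's sterm list \<Rightarrow> bool" where
  "sigma_forest ar f = (\<forall>t\<in>set f. wf_term ar t)"

definition reduced :: "'s sterm list \<Rightarrow> bool" where
  "reduced f = (\<forall>t\<in>set f. t \<noteq> Bot)"

text \<open>Internal nodes of a forest in left-to-right preorder (numbered 0,1,... here),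
  each recorded as (decoration, index of its parent if any).\<close>
fun pre_nodes :: "nat option \<Rightarrow> nat \<Rightarrow> 's sterm list \<Rightarrow> ('s \<times> nat option) list" where
  "pre_nodes p n [] = []"
| "pre_nodes p n (Bot # ts) = pre_nodes p n ts"
| "pre_nodes p n (Node s us # ts) =
     (let L = pre_nodes (Some n) (Suc n) us
      in (s, p) # L @ pre_nodes p (Suc n + length L) ts)"

definition nodes :: "'s sterm list \<Rightarrow> ('s \<times> nat option) list" where
  "nodes f = pre_nodes None 0 f"

definition deg :: "'s sterm list \<Rightarrow> nat" where
  "deg f = length (nodes f)"

definition dec :: "'s sterm list \<Rightarrow> nat \<Rightarrow> 's" where
  "dec f i = fst (nodes f ! i)"

definition is_child :: "'s sterm list \<Rightarrow> nat \<Rightarrow> nat \<Rightarrow> bool" where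
  "is_child f i' i = (i' < deg f \<and> snd (nodes f ! i') = Some i)"

text \<open>Letters a^s_l of A_l(Sigma) are pairs (s, l); words are lists of letters.\<close>
type_synonym 's letter = "'s \<times> nat"

definition Al_compatible :: "'s letter list \<Rightarrow> 's sterm list \<Rightarrow> bool" where
  "Al_compatible w f =
     (length w = deg f \<and> (\<forall>i<deg f. fst (w ! i) = dec f i) \<and>
      (\<forall>i i'. i < deg f \<longrightarrow> i' < deg f \<longrightarrow> is_child f i' i \<longrightarrow> snd (w ! i) < snd (w ! i')))"

text \<open>r_{A_l(Sigma)}(E_f): the formal sum of all compatible words, represented as its
  coefficient function on words (a noncommutative series over the field 'k).\<close>
definition r_Al :: "'s sterm list \<Rightarrow> ('s letter list \<Rightarrow> 'k::field)" where
  "r_Al f = (\<lambda>w. if Al_compatible w f then 1 else 0)"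

text \<open>Trimmed forests: planar rooted trees with decorated nodes; tr deletes all leaves.\<close>
datatype 's ttree = TNode 's "'s ttree list"

fun tr_term :: "'s sterm \<Rightarrow> 's ttree list" where
  "tr_term Bot = []"
| "tr_term (Node s ts) = [TNode s (concat (map tr_term ts))]"

definition tr :: "'s sterm list \<Rightarrow> 's ttree list" where
  "tr f = concat (map tr_term f)"

end

theory Submission
  imports Defs
begin

fun tn :: "nat option \<Rightarrow> nat \<Rightarrow> 's ttree list \<Rightarrow> ('s \<times> nat option) list" where
  "tn p n [] = []"
| "tn p n (TNode s us # ts) =
     (let L = tn (Some n) (Suc n) us
      in (s, p) # L @ tn p (Suc n + length L) ts)"

lemma tr_Nil[simp]: "tr [] = []" by (simp add: tr_def)
lemma tr_Bot[simp]: "tr (Bot # ts) = tr ts" by (simp add: tr_def)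
lemma tr_Node[simp]: "tr (Node s us # ts) = TNode s (tr us) # tr ts" by (simp add: tr_def)

lemma pre_nodes_tn: "pre_nodes p n f = tn p n (tr f)"
  by (induction p n f rule: pre_nodes.induct) (auto simp: Let_def)

lemma tn_parents: "e \<in> set (tn p n xs) \<Longrightarrow> snd e = p \<or> (\<exists>k. snd e = Some k \<and> n \<le> k)"
proof (induction p n xs arbitrary: e rule: tn.induct)
  case (1 p n) then show ?case by simp
next
  case (2 p n s us ts)
  define A where "A = tn (Some n) (Suc n) us"
  have L: "tn p n (TNode s us # ts) = (s,p) # A @ tn p (Suc n + length A) ts"
    by (simp add: A_def Let_def)
  have "e = (s,p) \<or> e \<in> set A \<or> e \<in> set (tn p (Suc n + length A) ts)"
    using 2(3) L by auto
  moreover have "e \<in> set A \<Longrightarrow> ?case" using 2(1)[of e] A_def by auto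
  moreover have "e \<in> set (tn p (Suc n + length A) ts) \<Longrightarrow> ?case"
    using 2(2)[of A e] A_def by auto
  ultimately show ?case by auto
qed

lemma tn_good: "k < length (tn p n xs) \<Longrightarrow> snd (tn p n xs ! k) = Some a \<Longrightarrow>
   p = Some a \<or> (n \<le> a \<and> a < n + k)"
proof (induction p n xs arbitrary: k rule: tn.induct)
  case (1 p n) then show ?case by simp
next
  case (2 p n s us ts)
  define A where "A = tn (Some n) (Suc n) us"
  define B where "B = tn p (Suc n + length A) ts"
  have L: "tn p n (TNode s us # ts) = (s,p) # A @ B" by (simp add: A_def B_def Let_def)
  show ?case
  proof (cases k)
    case 0 then show ?thesis using 2(4) L by simp
  next
    case (Suc j)
    show ?thesis
    proof (cases "j < length A")
      case True
      then have "snd (A ! j) = Some a" using 2(4) L Suc by (simp add: nth_append)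
      then have "Some n = Some a \<or> (Suc n \<le> a \<and> a < Suc n + j)"
        using 2(1)[of j] True A_def by simp
      then show ?thesis using Suc by auto
    next
      case False
      then have "snd (B ! (j - length A)) = Some a" "j - length A < length B"
        using 2(4) 2(3) L Suc by (auto simp: nth_append)
      then have "p = Some a \<or> (Suc n + length A \<le> a \<and> a < Suc n + length A + (j - length A))"
        using 2(2)[of A "j - length A"] A_def B_def by simp
      then show ?thesis using Suc False by auto
    qed
  qed
qed

lemma tn_nonempty: "tn p (n::nat) xs = [] \<longleftrightarrow> xs = []"
  by (cases "(p,n,xs)" rule: tn.cases) (auto simp: Let_def)

lemma tn_inj: "p = None \<or> (\<exists>k. p = Some k \<and> k < n) \<Longrightarrow> tn p n xs = tn p n ys \<Longrightarrow> xs = ys"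
proof (induction p n xs arbitrary: ys rule: tn.induct)
  case (1 p n)
  then show ?case using tn_nonempty[of p n ys] by simp
next
  case (2 p n s us ts)
  obtain s' us' ts' where ys: "ys = TNode s' us' # ts'"
    using 2(4) tn_nonempty[of p n ys] by (cases "(p,n,ys)" rule: tn.cases) (auto simp: Let_def)
  define A where "A = tn (Some n) (Suc n) us"
  define B where "B = tn p (Suc n + length A) ts"
  define A' where "A' = tn (Some n) (Suc n) us'"
  define B' where "B' = tn p (Suc n + length A') ts'"
  have eq: "(s,p) # A @ B = (s',p) # A' @ B'" using 2(4) ys
    by (simp add: A_def B_def A'_def B'_def Let_def)
  have ss: "s = s'" and AB: "A @ B = A' @ B'" using eq by auto
  have pA: "\<And>e. e \<in> set A \<Longrightarrow> snd e \<noteq> p" using tn_parents[of _ "Some n" "Suc n" us] 2(3)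
    unfolding A_def by fastforce
  have pA': "\<And>e. e \<in> set A' \<Longrightarrow> snd e \<noteq> p" using tn_parents[of _ "Some n" "Suc n" us'] 2(3)
    unfolding A'_def by fastforce
  have hdB: "snd (tn p m xs ! 0) = p" if "tn p m xs \<noteq> []" for p m xs
    using that by (cases "(p,m,xs)" rule: tn.cases) (auto simp: Let_def)
  have lenA: "length A = length A'"
  proof (rule ccontr)
    assume ne: "length A \<noteq> length A'"
    { fix A B A' B'
      assume AB: "A @ B = A' @ B'" and lt: "length A < length A'"
        and pA': "\<And>e. e \<in> set A' \<Longrightarrow> snd e \<noteq> p"
        and hB: "B \<noteq> [] \<Longrightarrow> snd (B ! 0) = p"
      have "B \<noteq> []"
      proof
        assume "B = []"
        then have "length A = length A' + length B'" using arg_cong[OF AB, of length] by simp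
        with lt show False by simp
      qed
      then have "snd (B ! 0) = p" using hB by simp
      moreover have "(A @ B) ! length A = B ! 0" by (simp add: nth_append)
      moreover have "(A' @ B') ! length A = A' ! length A" using lt by (simp add: nth_append)
      ultimately have False using AB pA' lt by (metis nth_mem)
    }
    note * = this
    show False
    proof (cases "length A < length A'")
      case True
      then show False using *[OF AB True pA'] hdB B_def by blast
    next
      case False
      then have "length A' < length A" using ne by simp
      then show False using *[OF AB[symmetric] _ pA] hdB B'_def by blast
    qed
  qed
  have AA: "A = A'" and BB: "B = B'" using AB lenA by auto
  have "us = us'" using 2(1)[of us'] AA A_def A'_def by simp
  moreover have "ts = ts'"
  proof (rule 2(2)[of A ts'])
    show "A = tn (Some n) (Suc n) us" by (rule A_def)
    show "p = None \<or> (\<exists>k. p = Some k \<and> k < Suc n + length A)" using 2(3) by auto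
    show "tn p (Suc n + length A) ts = tn p (Suc n + length A) ts'"
      using BB unfolding B_def B'_def lenA .
  qed
  ultimately show ?case using ys ss by simp
qed

definition compat :: "('s \<times> nat option) list \<Rightarrow> 's letter list \<Rightarrow> bool" where
  "compat N w = (length w = length N \<and> (\<forall>i<length N. fst (w!i) = fst (N!i)) \<and>
     (\<forall>i i'. i < length N \<longrightarrow> i' < length N \<longrightarrow> snd (N!i') = Some i \<longrightarrow> snd (w!i) < snd (w!i')))"

lemma Al_compat: "Al_compatible w f = compat (nodes f) w"
  unfolding Al_compatible_def compat_def deg_def dec_def is_child_def by auto

definition good :: "('s \<times> nat option) list \<Rightarrow> bool" where
  "good N = (\<forall>k<length N. \<forall>a. snd (N!k) = Some a \<longrightarrow> a < k)"

lemma nodes_good: "good (nodes f)"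
  unfolding good_def nodes_def pre_nodes_tn using tn_good[of _ None 0] by fastforce

inductive anc :: "('s \<times> nat option) list \<Rightarrow> nat \<Rightarrow> nat \<Rightarrow> bool" for N where
  a1: "b < length N \<Longrightarrow> snd (N!b) = Some a \<Longrightarrow> anc N a b"
| a2: "b < length N \<Longrightarrow> snd (N!b) = Some c \<Longrightarrow> anc N a c \<Longrightarrow> anc N a b"

lemma anc_le: "anc N a b \<Longrightarrow> good N \<Longrightarrow> a < b \<and> (\<exists>c. snd (N!b) = Some c \<and> a \<le> c)"
  by (induction rule: anc.induct) (fastforce simp: good_def)+

definition lab :: "('s \<times> nat option) list \<Rightarrow> nat \<Rightarrow> 's letter list" where
  "lab N i = map (\<lambda>k. (fst (N!k), k + (if k = i \<or> anc N i k then length N else 0))) [0..<length N]"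

lemma lab_compat: "good N \<Longrightarrow> compat N (lab N i)"
  unfolding compat_def lab_def
proof (intro conjI allI impI, goal_cases)
  case 1 then show ?case by simp
next
  case (2 k) then show ?case by simp
next
  case (3 a b)
  have ab: "a < b" using 3 unfolding good_def by blast
  have "a = i \<or> anc N i a \<Longrightarrow> anc N i b" using 3 by (auto intro: anc.intros)
  then show ?case using 3 ab by auto
qed

lemma word0_compat: "good N \<Longrightarrow> compat N (map (\<lambda>k. (fst (N!k), k)) [0..<length N])"
  unfolding compat_def good_def by auto

lemma par_sub:
  assumes g1: "good N1" and g2: "good N2" and eqv: "\<And>w. compat N1 w \<longleftrightarrow> compat N2 w"
    and len: "length N1 = length N2" and j: "j < length N1" and P: "snd (N1!j) = Some i"
  shows "\<exists>c. snd (N2!j) = Some c \<and> i \<le> c"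
proof -
  have ij: "i < j" using g1 j P unfolding good_def by blast
  have "compat N1 (lab N2 i)" using eqv lab_compat[OF g2] by blast
  then have "snd (lab N2 i ! i) < snd (lab N2 i ! j)"
    using ij j P unfolding compat_def by auto
  then have "anc N2 i j" using ij j len unfolding lab_def by (auto split: if_splits)
  then show ?thesis using anc_le g2 by blast
qed

lemma compat_eq:
  assumes g1: "good N1" and g2: "good N2" and eqv: "\<And>w. compat N1 w \<longleftrightarrow> compat N2 w"
  shows "N1 = N2"
proof -
  have c: "compat N2 (map (\<lambda>k. (fst (N1!k), k)) [0..<length N1])"
    using eqv word0_compat[OF g1] by blast
  then have len: "length N1 = length N2" unfolding compat_def by simp
  have fsts: "\<And>k. k < length N1 \<Longrightarrow> fst (N1!k) = fst (N2!k)"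
    using c len unfolding compat_def by auto
  have eqv': "\<And>w. compat N2 w \<longleftrightarrow> compat N1 w" using eqv by blast
  have snds: "snd (N1!k) = snd (N2!k)" if k: "k < length N1" for k
  proof (cases "snd (N1!k)")
    case None
    show ?thesis
    proof (cases "snd (N2!k)")
      case (Some c)
      then show ?thesis using par_sub[OF g2 g1 eqv' len[symmetric] _ Some] k len None by auto
    qed (simp add: None)
  next
    case (Some i)
    obtain c where c: "snd (N2!k) = Some c" "i \<le> c" using par_sub[OF g1 g2 eqv len k Some] by blast
    obtain c' where "snd (N1!k) = Some c'" "c \<le> c'"
      using par_sub[OF g2 g1 eqv' len[symmetric] _ c(1)] k len by auto
    then show ?thesis using Some c by simp
  qed
  show ?thesis
  proof (rule nth_equalityI)
    show "length N1 = length N2" by (rule len)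
  next
    fix k assume "k < length N1"
    then show "N1 ! k = N2 ! k" using fsts snds by (simp add: prod_eq_iff)
  qed
qed

theorem lemma5p3:
  fixes ar :: "'s \<Rightarrow> nat" and f1 f2 :: "'s sterm list"
  assumes "sigma_forest ar f1" and "sigma_forest ar f2"
    and "reduced f1" and "reduced f2"
  shows "((r_Al f1 :: 's letter list \<Rightarrow> 'k::field) = r_Al f2) \<longleftrightarrow> tr f1 = tr f2"
proof
  assume h: "(r_Al f1 :: 's letter list \<Rightarrow> 'k::field) = r_Al f2"
  have "\<And>w. compat (nodes f1) w \<longleftrightarrow> compat (nodes f2) w"
  proof -
    fix w
    have "(r_Al f1 :: 's letter list \<Rightarrow> 'k::field) w = r_Al f2 w" using h by simp
    then show "compat (nodes f1) w \<longleftrightarrow> compat (nodes f2) w"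
      unfolding r_Al_def Al_compat by (auto split: if_splits)
  qed
  then have "nodes f1 = nodes f2" using compat_eq nodes_good by blast
  then show "tr f1 = tr f2" unfolding nodes_def pre_nodes_tn using tn_inj[of None 0] by blast
next
  assume "tr f1 = tr f2"
  then have "nodes f1 = nodes f2" unfolding nodes_def pre_nodes_tn by simp
  then show "(r_Al f1 :: 's letter list \<Rightarrow> 'k::field) = r_Al f2"
    unfolding r_Al_def Al_compat by simp
qed

end
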